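(* Let $\eta\ge2$ and $P\in\mathfrak N_\eta$ with $h_P>\eta$. Then $P$ does not have a 4-crown as a retract.
   Context: All posets are finite; $h_P$ is the height; level sets $P(0)=\min P$, $P(k+1)=\min(P\setminus\bigcup_{i\le k}P(i))$; $A<B$ means $a<b$ for all $a\in A,b\in B$. A 4-crown is the ordinal sum of two 2-element antichains. A retract is the image of an idempotent order-preserving self-map. A section of width three is a poset $P$ of height $h_P\ge1$ with carrier $\{c_{k,j}:k\in[0,h_P],j\in\{0,1,2\}\}$ such that: $c_{0,j}<\dots<c_{h_P,j}$ for each $j$; each $\{c_{k,0},c_{k,1},c_{k,2}\}$ is an antichain; $c_{k,i}<c_{\ell,j}\Rightarrow c_{k,i+1}<c_{\ell,j+1}$ (indices mod 3); and for no $k$ is $P(k)<P(k+1)$. It is nice if for all $x<y$: $\{z:z>x\}\not\subseteq\{z:z\ge y\}$ and $\{z:z<y\}\not\subseteq\{z:z\le x\}$. The horizon of a nice section of height $\ge2$ is the smallest $\eta\in\mathbb N$ with $P(k)<P(k+\eta)$ for all $k\in[0,h_P-\eta]$; $\mathfrak N_\eta$ is the class of nice sections of height $\ge2$ with horizon $\eta$. *)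

theory Defs
  imports Main
begin

definition finite_poset :: "'a set \<Rightarrow> ('a \<Rightarrow> 'a \<Rightarrow> bool) \<Rightarrow> bool" where
  "finite_poset A le \<longleftrightarrow> finite A \<and>
     (\<forall>x\<in>A. le x x) \<and>
     (\<forall>x\<in>A. \<forall>y\<in>A. le x y \<and> le y x \<longrightarrow> x = y) \<and>
     (\<forall>x\<in>A. \<forall>y\<in>A. \<forall>z\<in>A. le x y \<and> le y z \<longrightarrow> le x z)"

definition lt :: "('a \<Rightarrow> 'a \<Rightarrow> bool) \<Rightarrow> 'a \<Rightarrow> 'a \<Rightarrow> bool" where
  "lt le x y \<longleftrightarrow> le x y \<and> x \<noteq> y"

definition set_less :: "('a \<Rightarrow> 'a \<Rightarrow> bool) \<Rightarrow> 'a set \<Rightarrow> 'a set \<Rightarrow> bool" where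
  "set_less le X Y \<longleftrightarrow> (\<forall>a\<in>X. \<forall>b\<in>Y. lt le a b)"

definition is_chain :: "('a \<Rightarrow> 'a \<Rightarrow> bool) \<Rightarrow> 'a set \<Rightarrow> bool" where
  "is_chain le C \<longleftrightarrow> (\<forall>x\<in>C. \<forall>y\<in>C. le x y \<or> le y x)"

definition height :: "'a set \<Rightarrow> ('a \<Rightarrow> 'a \<Rightarrow> bool) \<Rightarrow> nat" where
  "height A le = Max {card C - 1 | C. C \<subseteq> A \<and> C \<noteq> {} \<and> is_chain le C}"

definition minset :: "('a \<Rightarrow> 'a \<Rightarrow> bool) \<Rightarrow> 'a set \<Rightarrow> 'a set" where
  "minset le S = {x \<in> S. \<not> (\<exists>y\<in>S. lt le y x)}"

text \<open>remaining k = A minus the union of levels 0..k-1; level k = min of remaining k.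
  This is P(0) = min P, P(k+1) = min (P minus union of P(i), i \<le> k).\<close>
fun remaining :: "'a set \<Rightarrow> ('a \<Rightarrow> 'a \<Rightarrow> bool) \<Rightarrow> nat \<Rightarrow> 'a set" where
  "remaining A le 0 = A"
| "remaining A le (Suc k) = remaining A le k - minset le (remaining A le k)"

definition level :: "'a set \<Rightarrow> ('a \<Rightarrow> 'a \<Rightarrow> bool) \<Rightarrow> nat \<Rightarrow> 'a set" where
  "level A le k = minset le (remaining A le k)"

definition section3 :: "'a set \<Rightarrow> ('a \<Rightarrow> 'a \<Rightarrow> bool) \<Rightarrow> bool" where
  "section3 A le \<longleftrightarrow> height A le \<ge> 1 \<and>
    (\<exists>c :: nat \<Rightarrow> nat \<Rightarrow> 'a.
      let h = height A le in
      inj_on (\<lambda>(k, j). c k j) ({0..h} \<times> {0..<3}) \<and>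
      A = {c k j | k j. k \<le> h \<and> j < 3} \<and>
      (\<forall>j<3. \<forall>k<h. lt le (c k j) (c (Suc k) j)) \<and>
      (\<forall>k\<le>h. \<forall>i<3. \<forall>j<3. i \<noteq> j \<longrightarrow> \<not> le (c k i) (c k j)) \<and>
      (\<forall>k\<le>h. \<forall>l\<le>h. \<forall>i<3. \<forall>j<3.
          lt le (c k i) (c l j) \<longrightarrow> lt le (c k ((i + 1) mod 3)) (c l ((j + 1) mod 3))) \<and>
      (\<forall>k. k + 1 \<le> h \<longrightarrow> \<not> set_less le (level A le k) (level A le (k + 1))))"

definition nice :: "'a set \<Rightarrow> ('a \<Rightarrow> 'a \<Rightarrow> bool) \<Rightarrow> bool" where
  "nice A le \<longleftrightarrow> (\<forall>x\<in>A. \<forall>y\<in>A. lt le x y \<longrightarrow>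
      \<not> ({z\<in>A. lt le x z} \<subseteq> {z\<in>A. le y z}) \<and>
      \<not> ({z\<in>A. lt le z y} \<subseteq> {z\<in>A. le z x}))"

definition horizon :: "'a set \<Rightarrow> ('a \<Rightarrow> 'a \<Rightarrow> bool) \<Rightarrow> nat" where
  "horizon A le = (LEAST \<eta>. \<forall>k. k + \<eta> \<le> height A le \<longrightarrow>
      set_less le (level A le k) (level A le (k + \<eta>)))"

definition in_N :: "nat \<Rightarrow> 'a set \<Rightarrow> ('a \<Rightarrow> 'a \<Rightarrow> bool) \<Rightarrow> bool" where
  "in_N \<eta> A le \<longleftrightarrow> finite_poset A le \<and> section3 A le \<and> nice A le \<and>
     height A le \<ge> 2 \<and> horizon A le = \<eta>"

definition has_4crown_retract :: "'a set \<Rightarrow> ('a \<Rightarrow> 'a \<Rightarrow> bool) \<Rightarrow> bool" where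
  "has_4crown_retract A le \<longleftrightarrow> (\<exists>r. (\<forall>x\<in>A. r x \<in> A) \<and>
     (\<forall>x\<in>A. \<forall>y\<in>A. le x y \<longrightarrow> le (r x) (r y)) \<and>
     (\<forall>x\<in>A. r (r x) = r x) \<and>
     (\<exists>a b c d. r ` A = {a, b, c, d} \<and> a \<noteq> b \<and> c \<noteq> d \<and>
        \<not> le a b \<and> \<not> le b a \<and> \<not> le c d \<and> \<not> le d c \<and>
        lt le a c \<and> lt le a d \<and> lt le b c \<and> lt le b d))"

end

theory Submission
  imports Defs
begin

theorem lemma3p7:
  fixes A :: "'a set" and le :: "'a \<Rightarrow> 'a \<Rightarrow> bool" and \<eta> :: nat
  assumes "\<eta> \<ge> 2"
    and "in_N \<eta> A le"
    and "height A le > \<eta>"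
  shows "\<not> has_4crown_retract A le"
proof
  assume H: "has_4crown_retract A le"
  have fp: "finite_poset A le" and sec: "section3 A le" and nic: "nice A le"
    and hor: "horizon A le = \<eta>" using assms(2) unfolding in_N_def by auto
  define h where "h = height A le"
  have hgt: "h > \<eta>" using assms(3) h_def by simp
  from sec obtain c :: "nat \<Rightarrow> nat \<Rightarrow> 'a" where
    Aeq: "A = {c k j | k j. k \<le> h \<and> j < 3}" and
    colS: "\<forall>j<3. \<forall>k<h. lt le (c k j) (c (Suc k) j)" and
    anti: "\<forall>k\<le>h. \<forall>i<3. \<forall>j<3. i \<noteq> j \<longrightarrow> \<not> le (c k i) (c k j)" and
    shift: "\<forall>k\<le>h. \<forall>l\<le>h. \<forall>i<3. \<forall>j<3. lt le (c k i) (c l j) \<longrightarrow> lt le (c k ((i + 1) mod 3)) (c l ((j + 1) mod 3))"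
    unfolding section3_def Let_def h_def by blast
  have refl: "\<And>x. x \<in> A \<Longrightarrow> le x x"
    and antis: "\<And>x y. x\<in>A \<Longrightarrow> y\<in>A \<Longrightarrow> le x y \<Longrightarrow> le y x \<Longrightarrow> x = y"
    and trans: "\<And>x y z. x\<in>A \<Longrightarrow> y\<in>A \<Longrightarrow> z\<in>A \<Longrightarrow> le x y \<Longrightarrow> le y z \<Longrightarrow> le x z"
    using fp unfolding finite_poset_def by blast+
  have cA: "\<And>k j. k \<le> h \<Longrightarrow> j < 3 \<Longrightarrow> c k j \<in> A" using Aeq by blast
  have Acs: "\<And>x. x \<in> A \<Longrightarrow> \<exists>k j. x = c k j \<and> k \<le> h \<and> j < 3" using Aeq by blast
  have col_le: "\<And>k j. k \<le> l \<Longrightarrow> l \<le> h \<Longrightarrow> j < 3 \<Longrightarrow> le (c k j) (c l j)" for l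
  proof (induction l)
    case 0 thus ?case using refl cA by auto
  next
    case (Suc l k j)
    show ?case
    proof (cases "k = Suc l")
      case True thus ?thesis using refl cA Suc.prems by auto
    next
      case False
      hence "k \<le> l" using Suc.prems by auto
      hence 1: "le (c k j) (c l j)" using Suc by auto
      have 2: "le (c l j) (c (Suc l) j)" using colS Suc.prems unfolding lt_def by auto
      show ?thesis using trans[OF cA cA cA 1 2] Suc.prems \<open>k \<le> l\<close> by auto
    qed
  qed
  have col_lt: "\<And>k l (j::nat). k < l \<Longrightarrow> l \<le> h \<Longrightarrow> j < 3 \<Longrightarrow> lt le (c k j) (c l j)"
  proof -
    fix k l j :: nat assume kl: "k < l" "l \<le> h" "j < 3"
    have 1: "lt le (c k j) (c (Suc k) j)" using colS kl by auto
    have 2: "le (c (Suc k) j) (c l j)" using col_le kl by auto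
    have 3: "le (c k j) (c l j)" using trans[OF cA cA cA _ 2] 1 kl unfolding lt_def by auto
    have "c k j \<noteq> c l j"
    proof
      assume e: "c k j = c l j"
      have "c k j = c (Suc k) j" using antis[OF cA cA] 1 2 e kl unfolding lt_def by auto
      thus False using 1 unfolding lt_def by auto
    qed
    thus "lt le (c k j) (c l j)" using 3 unfolding lt_def by auto
  qed
  have no_down: "\<And>k l i j. k \<le> l \<Longrightarrow> l \<le> h \<Longrightarrow> i<3 \<Longrightarrow> j<3 \<Longrightarrow> \<not> lt le (c l i) (c k j)"
  proof
    fix k l i j assume kl: "k \<le> l" "l \<le> h" "i<3" "j<3" and L: "lt le (c l i) (c k j)"
    have 1: "le (c k i) (c l i)" using col_le kl by auto
    have 2: "le (c l i) (c k j)" using L unfolding lt_def by auto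
    have 3: "le (c k i) (c k j)" using trans[OF cA cA cA 1 2] kl by auto
    show False
    proof (cases "i = j")
      case True
      have "c k i = c l i" using antis[OF cA cA 1] 2 True kl by auto
      thus False using L True unfolding lt_def by auto
    next
      case False thus False using anti 3 kl by auto
    qed
  qed
  have rem: "k \<le> h \<Longrightarrow> remaining A le k = {c l j | l j. k \<le> l \<and> l \<le> h \<and> j < 3}" for k
  proof (induction k)
    case 0 thus ?case using Aeq by simp
  next
    case (Suc k)
    hence IH: "remaining A le k = {c l j | l j. k \<le> l \<and> l \<le> h \<and> j < 3}" by auto
    have ms: "minset le (remaining A le k) = {c k j | j. j < 3}"
    proof
      show "minset le (remaining A le k) \<subseteq> {c k j | j. j < 3}"
      proof
        fix x assume xm: "x \<in> minset le (remaining A le k)"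
        have nm: "\<not> (\<exists>y\<in>remaining A le k. lt le y x)" and xr: "x \<in> remaining A le k"
          using xm unfolding minset_def by auto
        from xr obtain l j where x: "x = c l j" "k \<le> l" "l \<le> h" "j < 3"
          unfolding IH by blast
        have "l = k"
        proof (rule ccontr)
          assume "l \<noteq> k"
          hence "lt le (c k j) (c l j)" using col_lt x by auto
          moreover have kh: "k \<le> h" using Suc.prems by simp
          moreover have "c k j \<in> remaining A le k" unfolding IH using x kh by blast
          ultimately show False using nm x by auto
        qed
        thus "x \<in> {c k j | j. j < 3}" using x by auto
      qed
    next
      show "{c k j | j. j < 3} \<subseteq> minset le (remaining A le k)"
      proof
        fix x assume "x \<in> {c k j | j. j < 3}"
        then obtain j where x: "x = c k j" "j < 3" by auto
        have "x \<in> remaining A le k" unfolding IH using x Suc.prems Suc_leD by blast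
        moreover have "\<not> (\<exists>y\<in>remaining A le k. lt le y x)"
          using no_down x unfolding IH by auto
        ultimately show "x \<in> minset le (remaining A le k)" unfolding minset_def by auto
      qed
    qed
    show ?case
    proof
      show "remaining A le (Suc k) \<subseteq> {c l j | l j. Suc k \<le> l \<and> l \<le> h \<and> j < 3}"
      proof
        fix x assume "x \<in> remaining A le (Suc k)"
        hence x1: "x \<in> remaining A le k" and x2: "x \<notin> {c k j | j. j < 3}" using ms by auto
        then obtain l j where x: "x = c l j" "k \<le> l" "l \<le> h" "j < 3" using IH by auto
        have "l \<noteq> k" using x x2 by auto
        hence "Suc k \<le> l" using x by simp
        thus "x \<in> {c l j | l j. Suc k \<le> l \<and> l \<le> h \<and> j < 3}" using x by blast
      qed
    next
      show "{c l j | l j. Suc k \<le> l \<and> l \<le> h \<and> j < 3} \<subseteq> remaining A le (Suc k)"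
      proof
        fix x assume "x \<in> {c l j | l j. Suc k \<le> l \<and> l \<le> h \<and> j < 3}"
        then obtain l j where x: "x = c l j" "Suc k \<le> l" "l \<le> h" "j < 3" by auto
        have "x \<notin> {c k j | j. j < 3}"
        proof
          assume "x \<in> {c k j | j. j < 3}"
          then obtain i where i: "x = c k i" "i < 3" by auto
          have "lt le (c k j) (c l j)" using col_lt x by auto
          hence "lt le (c k j) (c k i)" using x i by simp
          thus False using no_down[of k k j i] x i by auto
        qed
        thus "x \<in> remaining A le (Suc k)" using IH ms x by auto
      qed
    qed
  qed
  have lev: "\<And>k j. k \<le> h \<Longrightarrow> j<3 \<Longrightarrow> c k j \<in> level A le k"
  proof -
    fix k j :: nat assume kj: "k \<le> h" "j < 3"
    have "c k j \<in> remaining A le k" using rem[OF kj(1)] kj by auto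
    moreover have "\<not> (\<exists>y\<in>remaining A le k. lt le y (c k j))"
      using no_down kj unfolding rem[OF kj(1)] by auto
    ultimately show "c k j \<in> level A le k" unfolding level_def minset_def by auto
  qed
  from H obtain r a b cc d where
    rA: "\<forall>x\<in>A. r x \<in> A" and mono: "\<forall>x\<in>A. \<forall>y\<in>A. le x y \<longrightarrow> le (r x) (r y)"
    and idem: "\<forall>x\<in>A. r (r x) = r x"
    and img: "r ` A = {a, b, cc, d}" and ne: "a \<noteq> b" "cc \<noteq> d"
    and nab: "\<not> le a b" "\<not> le b a" and ncd: "\<not> le cc d" "\<not> le d cc"
    and ac: "lt le a cc" "lt le a d" "lt le b cc" "lt le b d"
    unfolding has_4crown_retract_def by blast
  have crA: "a \<in> A" "b \<in> A" "cc \<in> A" "d \<in> A" using img rA by (auto, metis imageE insertI1 insertI2)+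
  have fixr: "\<And>y. y \<in> r ` A \<Longrightarrow> r y = y" using idem by auto
  have ra: "r a = a" "r b = b" "r cc = cc" "r d = d" using fixr img by auto
  have rin: "\<And>x. x\<in>A \<Longrightarrow> r x \<in> {a, b, cc, d}" using img by auto
  have mo: "\<And>x y. x \<in> A \<Longrightarrow> y \<in> A \<Longrightarrow> le x y \<Longrightarrow> le (r x) (r y)" using mono by auto
  have below_a: "\<And>x. x \<in> {a, b, cc, d} \<Longrightarrow> le x a \<Longrightarrow> x = a"
  proof -
    fix x assume x: "x \<in> {a, b, cc, d}" "le x a"
    show "x = a"
    proof -
      have "x \<noteq> b" using x nab by auto
      moreover have "x \<noteq> cc" using x ac(1) antis[OF crA(1) crA(3)] unfolding lt_def by auto
      moreover have "x \<noteq> d" using x ac(2) antis[OF crA(1) crA(4)] unfolding lt_def by auto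
      ultimately show ?thesis using x by auto
    qed
  qed
  have below_b: "\<And>x. x \<in> {a, b, cc, d} \<Longrightarrow> le x b \<Longrightarrow> x = b"
  proof -
    fix x assume x: "x \<in> {a, b, cc, d}" "le x b"
    show "x = b"
    proof -
      have "x \<noteq> a" using x nab by auto
      moreover have "x \<noteq> cc" using x ac(3) antis[OF crA(2) crA(3)] unfolding lt_def by auto
      moreover have "x \<noteq> d" using x ac(4) antis[OF crA(2) crA(4)] unfolding lt_def by auto
      ultimately show ?thesis using x by auto
    qed
  qed
  have above_cc: "\<And>x. x \<in> {a, b, cc, d} \<Longrightarrow> le cc x \<Longrightarrow> x = cc"
  proof -
    fix x assume x: "x \<in> {a, b, cc, d}" "le cc x"
    show "x = cc"
    proof -
      have "x \<noteq> d" using x ncd by auto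
      moreover have "x \<noteq> a" using x ac(1) antis[OF crA(1) crA(3)] unfolding lt_def by auto
      moreover have "x \<noteq> b" using x ac(3) antis[OF crA(2) crA(3)] unfolding lt_def by auto
      ultimately show ?thesis using x by auto
    qed
  qed
  have above_d: "\<And>x. x \<in> {a, b, cc, d} \<Longrightarrow> le d x \<Longrightarrow> x = d"
  proof -
    fix x assume x: "x \<in> {a, b, cc, d}" "le d x"
    show "x = d"
    proof -
      have "x \<noteq> cc" using x ncd by auto
      moreover have "x \<noteq> a" using x ac(2) antis[OF crA(1) crA(4)] unfolding lt_def by auto
      moreover have "x \<noteq> b" using x ac(4) antis[OF crA(2) crA(4)] unfolding lt_def by auto
      ultimately show ?thesis using x by auto
    qed
  qed
  obtain ka pa where pa: "a = c ka pa" "ka \<le> h" "pa < 3" using Acs crA by blast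
  obtain kb pb where pb: "b = c kb pb" "kb \<le> h" "pb < 3" using Acs crA by blast
  obtain kc pc where pc: "cc = c kc pc" "kc \<le> h" "pc < 3" using Acs crA by blast
  obtain kd pd where pd: "d = c kd pd" "kd \<le> h" "pd < 3" using Acs crA by blast
  have ru: "r (c 0 pa) = a"
  proof -
    have "le (c 0 pa) a" using col_le pa by auto
    hence "le (r (c 0 pa)) a" using mo[OF cA crA(1)] ra pa by auto
    thus ?thesis using below_a rin cA pa by auto
  qed
  have rv: "r (c 0 pb) = b"
  proof -
    have "le (c 0 pb) b" using col_le pb by auto
    hence "le (r (c 0 pb)) b" using mo[OF cA crA(2)] ra pb by auto
    thus ?thesis using below_b rin cA pb by auto
  qed
  have rwc: "r (c h pc) = cc"
  proof -
    have "le cc (c h pc)" using col_le pc by auto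
    hence "le cc (r (c h pc))" using mo[OF crA(3) cA] ra pc by auto
    thus ?thesis using above_cc rin cA pc by auto
  qed
  have rwd: "r (c h pd) = d"
  proof -
    have "le d (c h pd)" using col_le pd by auto
    hence "le d (r (c h pd))" using mo[OF crA(4) cA] ra pd by auto
    thus ?thesis using above_d rin cA pd by auto
  qed
  have horP: "\<forall>k. k + \<eta> \<le> h \<longrightarrow> set_less le (level A le k) (level A le (k + \<eta>))"
  proof -
    have ex: "\<exists>e. \<forall>k. k + e \<le> height A le \<longrightarrow> set_less le (level A le k) (level A le (k + e))"
      by (rule exI[of _ "Suc (height A le)"]) auto
    from LeastI_ex[OF ex] hor show ?thesis unfolding horizon_def h_def by simp
  qed
  have bottom: "\<And>p x. p < 3 \<Longrightarrow> x < 3 \<Longrightarrow> le (c 0 p) (c (h - 1) x)"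
  proof -
    fix p x :: nat assume px: "p < 3" "x < 3"
    have "set_less le (level A le 0) (level A le \<eta>)" using horP[rule_format, of 0] hgt by simp
    hence 1: "lt le (c 0 p) (c \<eta> x)" using lev px hgt unfolding set_less_def by auto
    have 2: "le (c \<eta> x) (c (h - 1) x)" using col_le px hgt by auto
    show "le (c 0 p) (c (h - 1) x)" using trans[OF cA cA cA _ 2] 1 px hgt unfolding lt_def by auto
  qed
  have Lrow: "\<And>x. x < 3 \<Longrightarrow> r (c (h - 1) x) \<in> {cc, d}"
  proof -
    fix x :: nat assume x: "x < 3"
    have ya: "le a (r (c (h - 1) x))" using mo[OF cA cA bottom[OF pa(3) x]] ru x pa by auto
    have yb: "le b (r (c (h - 1) x))" using mo[OF cA cA bottom[OF pb(3) x]] rv x pb by auto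
    have "r (c (h - 1) x) \<in> {a, b, cc, d}" using rin cA x by auto
    thus "r (c (h - 1) x) \<in> {cc, d}" using ya yb nab by auto
  qed
  have topeq: "\<And>S T. S \<in> {cc, d} \<Longrightarrow> T \<in> {a, b, cc, d} \<Longrightarrow> le S T \<Longrightarrow> T = S"
  proof -
    fix S T assume S: "S \<in> {cc, d}" and T: "T \<in> {a, b, cc, d}" and ST: "le S T"
    from S have "S = cc \<or> S = d" by simp
    thus "T = S"
    proof
      assume "S = cc" thus ?thesis using above_cc[OF T] ST by simp
    next
      assume "S = d" thus ?thesis using above_d[OF T] ST by simp
    qed
  qed
  have eq: "\<And>x y. x < 3 \<Longrightarrow> y < 3 \<Longrightarrow> lt le (c (h - 1) x) (c h y) \<Longrightarrow> r (c h x) = r (c h y)"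
  proof -
    fix x y :: nat assume xy: "x < 3" "y < 3" "lt le (c (h - 1) x) (c h y)"
    have 1: "le (r (c (h - 1) x)) (r (c h y))" using mo[OF cA cA] xy unfolding lt_def by auto
    have 2: "le (r (c (h - 1) x)) (r (c h x))" using mo[OF cA cA col_le] xy by auto
    have T1: "r (c h y) \<in> {a, b, cc, d}" using rin[OF cA[of h y]] xy by simp
    have T2: "r (c h x) \<in> {a, b, cc, d}" using rin[OF cA[of h x]] xy by simp
    have "r (c h y) = r (c (h - 1) x)" using topeq[OF Lrow[OF xy(1)] T1 1] .
    moreover have "r (c h x) = r (c (h - 1) x)" using topeq[OF Lrow[OF xy(1)] T2 2] .
    ultimately show "r (c h x) = r (c h y)" by simp
  qed
  have x0y0: "lt le (c (h - 1) 0) (c h 0)" using col_lt hgt by auto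
  have nn: "\<forall>x\<in>A. \<forall>y\<in>A. lt le x y \<longrightarrow> \<not> ({z\<in>A. lt le x z} \<subseteq> {z\<in>A. le y z})"
    using nic unfolding nice_def by blast
  have "c (h - 1) 0 \<in> A" "c h 0 \<in> A" using cA by auto
  hence "\<not> ({z\<in>A. lt le (c (h - 1) 0) z} \<subseteq> {z\<in>A. le (c h 0) z})"
    using nn x0y0 by blast
  then obtain z where z: "z \<in> A" "lt le (c (h - 1) 0) z" "\<not> le (c h 0) z" by auto
  obtain l j where lj: "z = c l j" "l \<le> h" "j < 3" using Acs z by blast
  have "l = h"
  proof (rule ccontr)
    assume "l \<noteq> h"
    hence "l \<le> h - 1" using lj by auto
    thus False using no_down[of l "h - 1" 0 j] z lj hgt by auto
  qed
  have j0: "j \<noteq> 0"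
  proof
    assume "j = 0"
    hence "le (c h 0) z" using lj \<open>l = h\<close> refl[OF cA[of h 0]] by simp
    thus False using z by simp
  qed
  have s0: "lt le (c (h - 1) 0) (c h j)" using z lj \<open>l = h\<close> by simp
  have s1: "lt le (c (h - 1) 1) (c h ((j + 1) mod 3))" using shift[rule_format, of "h - 1" h 0 j] s0 lj by simp
  have s2: "lt le (c (h - 1) 2) (c h (((j + 1) mod 3 + 1) mod 3))"
    using shift[rule_format, of "h - 1" h 1 "(j + 1) mod 3"] s1 by (simp add: numeral_2_eq_2)
  have "r (c h 0) = r (c h 1) \<and> r (c h 1) = r (c h 2)"
  proof (cases "j = 1")
    case True
    thus ?thesis using eq[OF _ _ s0] eq[OF _ _ s1] eq[OF _ _ s2] by (auto simp: numeral_2_eq_2)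
  next
    case False
    hence "j = 2" using j0 lj by auto
    thus ?thesis using eq[OF _ _ s0] eq[OF _ _ s1] eq[OF _ _ s2] by (auto simp: numeral_2_eq_2)
  qed
  hence "\<And>p q. p < 3 \<Longrightarrow> q < 3 \<Longrightarrow> r (c h p) = r (c h q)"
  proof -
    fix p q :: nat assume "p < 3" "q < 3"
    hence "p = 0 \<or> p = 1 \<or> p = 2" "q = 0 \<or> q = 1 \<or> q = 2" by auto
    thus "r (c h p) = r (c h q)" using \<open>r (c h 0) = r (c h 1) \<and> r (c h 1) = r (c h 2)\<close> by auto
  qed
  hence "r (c h pc) = r (c h pd)" using pc(3) pd(3) by blast
  hence "cc = d" using rwc rwd by simp
  thus False using ne by simp
qed

end
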